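(* Let $X$ be a dendric shift over $\mathcal{A}_3=\{1,2,3\}$, let $\sigma\in\mathrm{DP}(X)$ and let $Y$ be the image of $X$ under $\sigma$. If $\mathcal{C}^-(Y)=\emptyset$, then $\mathcal{C}^-(X)=\emptyset$ and $\sigma$ is left-invariant. Respectively, if $\mathcal{C}^+(Y)=\emptyset$, then $\mathcal{C}^+(X)=\emptyset$ and $\sigma$ is right-invariant.
   Context: A shift space over $\mathcal{A}$ is a closed shift-invariant $X\subseteq\mathcal{A}^{\mathbb{Z}}$ in which all letters occur, with factor set $\mathcal{L}(X)$. For $w\in\mathcal{L}(X)$, $\mathcal{E}_X(w)$ is the bipartite graph with left vertices $a^-$ ($aw\in\mathcal{L}(X)$), right vertices $b^+$ ($wb\in\mathcal{L}(X)$), edges $\{a^-,b^+\}$ ($awb\in\mathcal{L}(X)$); $w$ is bispecial if it has at least two left and two right vertices, dendric if $\mathcal{E}_X(w)$ is a tree; $X$ is dendric if all factors are. $\mathcal{C}^-_X(w)$ (resp. $\mathcal{C}^+_X(w)$): letters $a$ such that removing $a^-$ (resp. $a^+$) and the resulting isolated vertices from $\mathcal{E}_X(w)$ leaves a disconnected graph; $\mathcal{C}^\pm(X)=\bigcup_{w\in\mathcal{L}(X)}\mathcal{C}^\pm_X(w)$. $\mathcal{S}_3=\{\alpha,\beta,\gamma,\eta\}\cup\{\delta^{(k)},\zeta^{(k)}:k\ge1\}$ with $\alpha:1\mapsto1,2\mapsto12,3\mapsto13$; $\beta:1\mapsto1,2\mapsto12,3\mapsto132$; $\gamma:1\mapsto1,2\mapsto12,3\mapsto123$;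 $\delta^{(k)}:1\mapsto1,2\mapsto123^k,3\mapsto123^{k+1}$; $\zeta^{(k)}:1\mapsto13^k,2\mapsto12,3\mapsto13^{k+1}$; $\eta:1\mapsto13,2\mapsto12,3\mapsto123$. $\sigma$ is left-invariant (right-invariant) if all longest common suffixes (prefixes) of $\sigma(a_1),\sigma(a_2)$, $a_1\ne a_2$, coincide. Image of $X$: $Y=\{S^k\sigma(x):x\in X,0\le k<|\sigma(x_0)|\}$. For non-empty $u\in\mathcal{L}(Y)$ containing $1$ there is a unique triple $(s,v,p)$, $v\in\mathcal{L}(X)$, $u=s\sigma(v)p$, with $s$ a proper suffix of $\sigma(a)$ and $p$ a non-empty prefix of $\sigma(b)$ for some $a,b$ with $avb\in\mathcal{L}(X)$; $u$ is an extended image of $v$. $\mathrm{DP}(X)$: set of $\sigma\in\mathcal{S}_3$ such that every bispecial extended image (in $Y$) of every $v\in\mathcal{L}(X)$ is dendric. *)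

theory Defs
  imports "HOL-Analysis.Analysis" "HOL-Library.Sublist"
begin

text \<open>Points of the full shift are bi-infinite sequences \<open>int \<Rightarrow> nat\<close>; the
topology is the product topology (HOL-Analysis.Function_Topology) of the
discrete topology on \<open>nat\<close>.\<close>

definition shift :: "(int \<Rightarrow> nat) \<Rightarrow> (int \<Rightarrow> nat)" where
  "shift x = (\<lambda>i. x (i + 1))"

definition shift_space :: "nat set \<Rightarrow> (int \<Rightarrow> nat) set \<Rightarrow> bool" where
  "shift_space A X \<longleftrightarrow>
     (\<forall>x\<in>X. \<forall>i. x i \<in> A) \<and> closed X \<and> shift ` X = X \<and>
     (\<forall>a\<in>A. \<exists>x\<in>X. \<exists>i. x i = a)"

definition lang :: "(int \<Rightarrow> nat) set \<Rightarrow> nat list set" where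
  "lang X = {w. \<exists>x\<in>X. \<exists>i::int. \<forall>j<length w. x (i + int j) = w ! j}"

definition gwalk :: "'v set \<Rightarrow> ('v \<Rightarrow> 'v \<Rightarrow> bool) \<Rightarrow> 'v list \<Rightarrow> bool" where
  "gwalk V E xs \<longleftrightarrow> xs \<noteq> [] \<and> set xs \<subseteq> V \<and>
     (\<forall>i. i + 1 < length xs \<longrightarrow> E (xs ! i) (xs ! (i + 1)))"

definition gconnected :: "'v set \<Rightarrow> ('v \<Rightarrow> 'v \<Rightarrow> bool) \<Rightarrow> bool" where
  "gconnected V E \<longleftrightarrow>
     (\<forall>u\<in>V. \<forall>v\<in>V. \<exists>xs. gwalk V E xs \<and> hd xs = u \<and> last xs = v)"

definition gcycle :: "'v set \<Rightarrow> ('v \<Rightarrow> 'v \<Rightarrow> bool) \<Rightarrow> 'v list \<Rightarrow> bool" where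
  "gcycle V E xs \<longleftrightarrow> gwalk V E xs \<and> length xs \<ge> 4 \<and> hd xs = last xs \<and> distinct (tl xs)"

definition gtree :: "'v set \<Rightarrow> ('v \<Rightarrow> 'v \<Rightarrow> bool) \<Rightarrow> bool" where
  "gtree V E \<longleftrightarrow> gconnected V E \<and> \<not> (\<exists>xs. gcycle V E xs)"

text \<open>Left vertex \<open>a\<^sup>-\<close> is \<open>Inl a\<close>, right vertex \<open>b\<^sup>+\<close> is \<open>Inr b\<close>.\<close>

definition ext_left :: "(int \<Rightarrow> nat) set \<Rightarrow> nat list \<Rightarrow> nat set" where
  "ext_left X w = {a. a # w \<in> lang X}"

definition ext_right :: "(int \<Rightarrow> nat) set \<Rightarrow> nat list \<Rightarrow> nat set" where
  "ext_right X w = {b. w @ [b] \<in> lang X}"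

definition ext_vertices :: "(int \<Rightarrow> nat) set \<Rightarrow> nat list \<Rightarrow> (nat + nat) set" where
  "ext_vertices X w = Inl ` ext_left X w \<union> Inr ` ext_right X w"

fun ext_adj :: "(int \<Rightarrow> nat) set \<Rightarrow> nat list \<Rightarrow> nat + nat \<Rightarrow> nat + nat \<Rightarrow> bool" where
  "ext_adj X w (Inl a) (Inr b) = (a # w @ [b] \<in> lang X)"
| "ext_adj X w (Inr b) (Inl a) = (a # w @ [b] \<in> lang X)"
| "ext_adj X w _ _ = False"

definition bispecial :: "(int \<Rightarrow> nat) set \<Rightarrow> nat list \<Rightarrow> bool" where
  "bispecial X w \<longleftrightarrow>
     (\<exists>a1 a2. a1 \<noteq> a2 \<and> a1 \<in> ext_left X w \<and> a2 \<in> ext_left X w) \<and>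
     (\<exists>b1 b2. b1 \<noteq> b2 \<and> b1 \<in> ext_right X w \<and> b2 \<in> ext_right X w)"

definition dendric_word :: "(int \<Rightarrow> nat) set \<Rightarrow> nat list \<Rightarrow> bool" where
  "dendric_word X w \<longleftrightarrow> gtree (ext_vertices X w) (ext_adj X w)"

definition dendric_shift :: "(int \<Rightarrow> nat) set \<Rightarrow> bool" where
  "dendric_shift X \<longleftrightarrow> (\<forall>w\<in>lang X. dendric_word X w)"

text \<open>Removing a vertex and the vertices that become isolated.\<close>

definition remove_vertex :: "'v set \<Rightarrow> ('v \<Rightarrow> 'v \<Rightarrow> bool) \<Rightarrow> 'v \<Rightarrow> 'v set" where
  "remove_vertex V E v = {u \<in> V - {v}. \<exists>u'\<in>V - {v}. E u u'}"

definition C_left_word :: "(int \<Rightarrow> nat) set \<Rightarrow> nat list \<Rightarrow> nat set" where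
  "C_left_word X w = {a \<in> ext_left X w.
     \<not> gconnected (remove_vertex (ext_vertices X w) (ext_adj X w) (Inl a)) (ext_adj X w)}"

definition C_right_word :: "(int \<Rightarrow> nat) set \<Rightarrow> nat list \<Rightarrow> nat set" where
  "C_right_word X w = {b \<in> ext_right X w.
     \<not> gconnected (remove_vertex (ext_vertices X w) (ext_adj X w) (Inr b)) (ext_adj X w)}"

definition C_left :: "(int \<Rightarrow> nat) set \<Rightarrow> nat set" where
  "C_left X = (\<Union>w\<in>lang X. C_left_word X w)"

definition C_right :: "(int \<Rightarrow> nat) set \<Rightarrow> nat set" where
  "C_right X = (\<Union>w\<in>lang X. C_right_word X w)"

text \<open>Substitutions are maps \<open>nat \<Rightarrow> nat list\<close>; only the values on 1,2,3 matter
(other letters are sent to the empty word).\<close>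

definition subst3 :: "nat list \<Rightarrow> nat list \<Rightarrow> nat list \<Rightarrow> nat \<Rightarrow> nat list" where
  "subst3 u1 u2 u3 = (\<lambda>a. if a = 1 then u1 else if a = 2 then u2 else if a = 3 then u3 else [])"

definition alpha_s :: "nat \<Rightarrow> nat list" where "alpha_s = subst3 [1] [1,2] [1,3]"
definition beta_s :: "nat \<Rightarrow> nat list" where "beta_s = subst3 [1] [1,2] [1,3,2]"
definition gamma_s :: "nat \<Rightarrow> nat list" where "gamma_s = subst3 [1] [1,2] [1,2,3]"
definition delta_s :: "nat \<Rightarrow> nat \<Rightarrow> nat list" where
  "delta_s k = subst3 [1] ([1,2] @ replicate k 3) ([1,2] @ replicate (k+1) 3)"
definition zeta_s :: "nat \<Rightarrow> nat \<Rightarrow> nat list" where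
  "zeta_s k = subst3 (1 # replicate k 3) [1,2] (1 # replicate (k+1) 3)"
definition eta_s :: "nat \<Rightarrow> nat list" where "eta_s = subst3 [1,3] [1,2] [1,2,3]"

definition S3 :: "(nat \<Rightarrow> nat list) set" where
  "S3 = {alpha_s, beta_s, gamma_s, eta_s} \<union> {delta_s k | k. k \<ge> 1} \<union> {zeta_s k | k. k \<ge> 1}"

fun lcp :: "'a list \<Rightarrow> 'a list \<Rightarrow> 'a list" where
  "lcp (x # xs) (y # ys) = (if x = y then x # lcp xs ys else [])"
| "lcp _ _ = []"

definition lcs :: "'a list \<Rightarrow> 'a list \<Rightarrow> 'a list" where
  "lcs xs ys = rev (lcp (rev xs) (rev ys))"

definition left_invariant :: "(nat \<Rightarrow> nat list) \<Rightarrow> bool" where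
  "left_invariant \<sigma> \<longleftrightarrow> (\<forall>a1\<in>{1,2,3}. \<forall>a2\<in>{1,2,3}. \<forall>b1\<in>{1,2,3}. \<forall>b2\<in>{1,2,3}.
     a1 \<noteq> a2 \<longrightarrow> b1 \<noteq> b2 \<longrightarrow> lcs (\<sigma> a1) (\<sigma> a2) = lcs (\<sigma> b1) (\<sigma> b2))"

definition right_invariant :: "(nat \<Rightarrow> nat list) \<Rightarrow> bool" where
  "right_invariant \<sigma> \<longleftrightarrow> (\<forall>a1\<in>{1,2,3}. \<forall>a2\<in>{1,2,3}. \<forall>b1\<in>{1,2,3}. \<forall>b2\<in>{1,2,3}.
     a1 \<noteq> a2 \<longrightarrow> b1 \<noteq> b2 \<longrightarrow> lcp (\<sigma> a1) (\<sigma> a2) = lcp (\<sigma> b1) (\<sigma> b2))"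

text \<open>\<open>cumlen \<sigma> x m\<close> is the position in \<open>\<sigma>(x)\<close> where the block \<open>\<sigma>(x_m)\<close> starts,
with \<open>\<sigma>(x_0)\<close> starting at position 0.\<close>

definition cumlen :: "(nat \<Rightarrow> nat list) \<Rightarrow> (int \<Rightarrow> nat) \<Rightarrow> int \<Rightarrow> int" where
  "cumlen \<sigma> x m =
     (if m \<ge> 0 then int (\<Sum>j<nat m. length (\<sigma> (x (int j))))
      else - int (\<Sum>j\<in>{1..nat (- m)}. length (\<sigma> (x (- int j)))))"

text \<open>\<open>subst_image \<sigma> X = {S^k \<sigma>(x) : x \<in> X, 0 \<le> k < |\<sigma>(x_0)|}\<close>.\<close>

definition subst_image :: "(nat \<Rightarrow> nat list) \<Rightarrow> (int \<Rightarrow> nat) set \<Rightarrow> (int \<Rightarrow> nat) set" where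
  "subst_image \<sigma> X = {y. \<exists>x\<in>X. \<exists>k. k < length (\<sigma> (x 0)) \<and>
     (\<forall>m. \<forall>j<length (\<sigma> (x m)). y (cumlen \<sigma> x m + int j - int k) = \<sigma> (x m) ! j)}"

definition extended_image :: "(nat \<Rightarrow> nat list) \<Rightarrow> (int \<Rightarrow> nat) set \<Rightarrow> nat list \<Rightarrow> nat list \<Rightarrow> bool" where
  "extended_image \<sigma> X u v \<longleftrightarrow>
     u \<in> lang (subst_image \<sigma> X) \<and> u \<noteq> [] \<and> 1 \<in> set u \<and> v \<in> lang X \<and>
     (\<exists>s p a b. u = s @ concat (map \<sigma> v) @ p \<and> strict_suffix s (\<sigma> a) \<and>
        p \<noteq> [] \<and> prefix p (\<sigma> b) \<and> a # v @ [b] \<in> lang X)"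

definition DP :: "(int \<Rightarrow> nat) set \<Rightarrow> (nat \<Rightarrow> nat list) set" where
  "DP X = {\<sigma> \<in> S3. \<forall>v\<in>lang X. \<forall>u. extended_image \<sigma> X u v \<and> bispecial (subst_image \<sigma> X) u
              \<longrightarrow> dendric_word (subst_image \<sigma> X) u}"

end

theory Submission
  imports Defs
begin


lemma ss_letters: "shift_space A X \<Longrightarrow> x \<in> X \<Longrightarrow> x i \<in> A"
  by (auto simp: shift_space_def)

lemma lang_letters:
  assumes "shift_space {1,2,3} X" "l \<in> lang X" shows "set l \<subseteq> {1,2,3}"
proof
  fix c assume "c \<in> set l"
  then obtain j where j: "j < length l" "l ! j = c" by (auto simp: in_set_conv_nth)
  from assms(2) obtain x i where "x \<in> X" "\<forall>j<length l. x (i + int j) = l ! j" by (auto simp: lang_def)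
  thus "c \<in> {1,2,3}" using j assms(1) ss_letters by metis
qed

lemma lang_ext_right: assumes "w \<in> lang X" shows "\<exists>b. w @ [b] \<in> lang X"
proof -
  from assms obtain x i where x: "x \<in> X" "\<forall>j<length w. x (i + int j) = w ! j" by (auto simp: lang_def)
  have "\<forall>j<length (w @ [x (i + int (length w))]). x (i + int j) = (w @ [x (i + int (length w))]) ! j"
    using x(2) by (auto simp: nth_append less_Suc_eq)
  thus ?thesis using x(1) unfolding lang_def by blast
qed

lemma lang_ext_left: assumes "w \<in> lang X" shows "\<exists>a. a # w \<in> lang X"
proof -
  from assms obtain x i where x: "x \<in> X" "\<forall>j<length w. x (i + int j) = w ! j" by (auto simp: lang_def)
  have "\<forall>j<length (x (i - 1) # w). x (i - 1 + int j) = (x (i - 1) # w) ! j"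
  proof (intro allI impI)
    fix j assume "j < length (x (i - 1) # w)"
    thus "x (i - 1 + int j) = (x (i - 1) # w) ! j"
      using x(2) by (cases j) auto
  qed
  thus ?thesis using x(1) unfolding lang_def by blast
qed

lemma lang_infix: assumes "l1 @ l2 @ l3 \<in> lang X" shows "l2 \<in> lang X"
proof -
  from assms obtain x i where x: "x \<in> X" "\<forall>j<length (l1 @ l2 @ l3). x (i + int j) = (l1 @ l2 @ l3) ! j"
    by (auto simp: lang_def)
  have "\<forall>j<length l2. x (i + int (length l1) + int j) = l2 ! j"
  proof (intro allI impI)
    fix j assume "j < length l2"
    thus "x (i + int (length l1) + int j) = l2 ! j"
      using x(2)[rule_format, of "length l1 + j"] by (auto simp: nth_append add.assoc)
  qed
  thus ?thesis using x(1) unfolding lang_def by blast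
qed

lemma lang_prefix: "l1 @ l2 \<in> lang X \<Longrightarrow> l1 \<in> lang X"
  using lang_infix[of "[]" l1 l2] by simp
lemma lang_suffix: "l1 @ l2 \<in> lang X \<Longrightarrow> l2 \<in> lang X"
  using lang_infix[of l1 l2 "[]"] by simp

lemma cumlen_Suc: "cumlen \<sigma> x (m + 1) = cumlen \<sigma> x m + int (length (\<sigma> (x m)))"
proof (cases "m \<ge> 0")
  case True
  then have "nat (m + 1) = Suc (nat m)" by simp
  then show ?thesis using True by (simp add: cumlen_def)
next
  case False
  define n where "n = nat (- (m + 1))"
  have mn: "m = - int n - 1" using False n_def by simp
  have A: "cumlen \<sigma> x (m + 1) = - int (\<Sum>j\<in>{1..n}. length (\<sigma> (x (- int j))))"
  proof (cases "n = 0")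
    case True then show ?thesis using mn by (simp add: cumlen_def)
  next
    case False
    then have "\<not> (m + 1 \<ge> 0)" "nat (- (m + 1)) = n" using mn by auto
    then show ?thesis unfolding cumlen_def by simp
  qed
  have "nat (- m) = Suc n" using mn by simp
  then have B: "cumlen \<sigma> x m = - int (\<Sum>j\<in>{1..Suc n}. length (\<sigma> (x (- int j))))"
    using False by (simp add: cumlen_def)
  have "- int (Suc n) = m" using mn by simp
  then show ?thesis using A B by (simp add: sum.atLeast1_atMost_eq)
qed


lemma cumlen_mono: "cumlen \<sigma> x m + int (length (\<sigma> (x m))) \<le> cumlen \<sigma> x (m + 1 + int d)"
proof (induction d)
  case 0 then show ?case by (simp add: cumlen_Suc)
next
  case (Suc d)
  have "cumlen \<sigma> x (m + 1 + int (Suc d)) = cumlen \<sigma> x ((m + 1 + int d) + 1)" by (simp add: algebra_simps)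
  also have "\<dots> \<ge> cumlen \<sigma> x (m + 1 + int d)" unfolding cumlen_Suc by simp
  finally show ?case using Suc by simp
qed

lemma cumlen_lt: "m < m' \<Longrightarrow> cumlen \<sigma> x m + int (length (\<sigma> (x m))) \<le> cumlen \<sigma> x m'"
  using cumlen_mono[of \<sigma> x m "nat (m' - m - 1)"] by simp

lemma cumlen_uniq:
  assumes "j < length (\<sigma> (x m))" "j' < length (\<sigma> (x m'))"
    "cumlen \<sigma> x m + int j = cumlen \<sigma> x m' + int j'"
  shows "m = m' \<and> j = j'"
proof -
  have "\<not> m < m'" using cumlen_lt[of m m' \<sigma> x] assms by linarith
  moreover have "\<not> m' < m" using cumlen_lt[of m' m \<sigma> x] assms by linarith
  ultimately have "m = m'" by simp
  then show ?thesis using assms by simp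
qed

definition ypt :: "(nat \<Rightarrow> nat list) \<Rightarrow> (int \<Rightarrow> nat) \<Rightarrow> int \<Rightarrow> nat" where
  "ypt \<sigma> x n = (SOME c. \<exists>m j. j < length (\<sigma> (x m)) \<and> n = cumlen \<sigma> x m + int j \<and> c = \<sigma> (x m) ! j)"

lemma ypt_val: assumes "j < length (\<sigma> (x m))" shows "ypt \<sigma> x (cumlen \<sigma> x m + int j) = \<sigma> (x m) ! j"
  unfolding ypt_def
proof (rule someI2)
  show "\<exists>m' j'. j' < length (\<sigma> (x m')) \<and> cumlen \<sigma> x m + int j = cumlen \<sigma> x m' + int j' \<and> \<sigma> (x m) ! j = \<sigma> (x m') ! j'"
    using assms by blast
next
  fix c assume "\<exists>m' j'. j' < length (\<sigma> (x m')) \<and> cumlen \<sigma> x m + int j = cumlen \<sigma> x m' + int j' \<and> c = \<sigma> (x m') ! j'"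
  then obtain m' j' where "j' < length (\<sigma> (x m'))" "cumlen \<sigma> x m + int j = cumlen \<sigma> x m' + int j'" "c = \<sigma> (x m') ! j'"
    by blast
  then show "c = \<sigma> (x m) ! j" using cumlen_uniq[of j \<sigma> x m j' m'] assms by auto
qed

definition goodsub :: "(nat \<Rightarrow> nat list) \<Rightarrow> bool" where
  "goodsub \<sigma> \<longleftrightarrow> (\<forall>a\<in>{1,2,3}. \<exists>t. \<sigma> a = 1 # t)"

lemma S3_good: "\<sigma> \<in> S3 \<Longrightarrow> goodsub \<sigma>"
  by (auto simp: S3_def goodsub_def alpha_s_def beta_s_def gamma_s_def delta_s_def zeta_s_def eta_s_def subst3_def)

lemma ypt_in:
  assumes ss: "shift_space {1,2,3} X" and x: "x \<in> X" and g: "goodsub \<sigma>"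
  shows "ypt \<sigma> x \<in> subst_image \<sigma> X"
proof -
  have "x 0 \<in> {1,2,3}" using ss x ss_letters by metis
  then have "0 < length (\<sigma> (x 0))" using g unfolding goodsub_def by fastforce
  moreover have "\<forall>m. \<forall>j<length (\<sigma> (x m)). ypt \<sigma> x (cumlen \<sigma> x m + int j - int 0) = \<sigma> (x m) ! j"
    using ypt_val by simp
  ultimately show ?thesis unfolding subst_image_def using x by blast
qed

lemma ypt_word:
  "\<forall>j<length z. x (i + int j) = z ! j \<Longrightarrow> n < length (concat (map \<sigma> z)) \<Longrightarrow>
     ypt \<sigma> x (cumlen \<sigma> x i + int n) = concat (map \<sigma> z) ! n"
proof (induction z arbitrary: i n)
  case Nil then show ?case by simp
next
  case (Cons a z)
  have xi: "x i = a" using Cons.prems(1)[rule_format, of 0] by simp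
  show ?case
  proof (cases "n < length (\<sigma> a)")
    case True
    then show ?thesis using ypt_val[of n \<sigma> x i] xi by (simp add: nth_append)
  next
    case False
    define n' where "n' = n - length (\<sigma> a)"
    have "\<forall>j<length z. x (i + 1 + int j) = z ! j"
      using Cons.prems(1) by (auto simp: add.assoc dest: spec[of _ "Suc _"])
    moreover have "n' < length (concat (map \<sigma> z))" using Cons.prems(2) False n'_def by simp
    ultimately have r: "ypt \<sigma> x (cumlen \<sigma> x (i + 1) + int n') = concat (map \<sigma> z) ! n'"
      using Cons.IH by blast
    have eq: "cumlen \<sigma> x i + int n = cumlen \<sigma> x (i + 1) + int n'"
      using False n'_def xi cumlen_Suc[of \<sigma> x i] by simp
    have "ypt \<sigma> x (cumlen \<sigma> x i + int n) = concat (map \<sigma> z) ! n'"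
      unfolding eq by (rule r)
    then show ?thesis using False n'_def by (simp add: nth_append)
  qed
qed

lemma forward:
  assumes ss: "shift_space {1,2,3} X" and g: "goodsub \<sigma>" and z: "z \<in> lang X"
  shows "concat (map \<sigma> z) \<in> lang (subst_image \<sigma> X)"
proof -
  from z obtain x i where x: "x \<in> X" "\<forall>j<length z. x (i + int j) = z ! j" by (auto simp: lang_def)
  have "\<forall>n<length (concat (map \<sigma> z)). ypt \<sigma> x (cumlen \<sigma> x i + int n) = concat (map \<sigma> z) ! n"
    using ypt_word[OF x(2)] by blast
  then show ?thesis using ypt_in[OF ss x(1) g] unfolding lang_def by blast
qed

lemma cover:
  assumes ne: "\<forall>m. \<sigma> (x m) \<noteq> []"
  shows "\<exists>m j. j < length (\<sigma> (x m)) \<and> t = cumlen \<sigma> x m + int j"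
proof (induction t rule: int_induct[where k=0])
  case base
  have "cumlen \<sigma> x 0 = 0" by (simp add: cumlen_def)
  then show ?case using ne by (intro exI[of _ 0] exI[of _ 0]) auto
next
  case (step1 t)
  then obtain m j where mj: "j < length (\<sigma> (x m))" "t = cumlen \<sigma> x m + int j" by blast
  show ?case
  proof (cases "Suc j < length (\<sigma> (x m))")
    case True then show ?thesis using mj by (intro exI[of _ m] exI[of _ "Suc j"]) auto
  next
    case False
    then have "t + 1 = cumlen \<sigma> x (m + 1) + int 0" using mj cumlen_Suc[of \<sigma> x m] by simp
    then show ?thesis using ne by (intro exI[of _ "m + 1"] exI[of _ 0]) auto
  qed
next
  case (step2 t)
  then obtain m j where mj: "j < length (\<sigma> (x m))" "t = cumlen \<sigma> x m + int j" by blast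
  show ?case
  proof (cases "j > 0")
    case True then show ?thesis using mj by (intro exI[of _ m] exI[of _ "j - 1"]) auto
  next
    case False
    have c: "cumlen \<sigma> x m = cumlen \<sigma> x (m - 1) + int (length (\<sigma> (x (m - 1))))"
      using cumlen_Suc[of \<sigma> x "m - 1"] by simp
    have "length (\<sigma> (x (m - 1))) > 0" using ne by simp
    moreover have "int (length (\<sigma> (x (m - 1))) - 1) = int (length (\<sigma> (x (m - 1)))) - 1"
      using \<open>length (\<sigma> (x (m - 1))) > 0\<close> by (simp add: of_nat_diff Suc_le_eq)
    ultimately have "t - 1 = cumlen \<sigma> x (m - 1) + int (length (\<sigma> (x (m - 1))) - 1)"
      using mj False c by simp
    moreover have "length (\<sigma> (x (m - 1))) - 1 < length (\<sigma> (x (m - 1)))"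
      using \<open>length (\<sigma> (x (m - 1))) > 0\<close> by simp
    ultimately show ?thesis by blast
  qed
qed

fun pairs :: "'a list \<Rightarrow> ('a \<times> 'a) set" where
  "pairs (a # b # l) = insert (a, b) (pairs (b # l))"
| "pairs _ = {}"

lemma pairs_nth: "Suc i < length l \<Longrightarrow> (l ! i, l ! Suc i) \<in> pairs l"
proof (induction l arbitrary: i rule: pairs.induct)
  case (1 a b l) then show ?case by (cases i) auto
qed auto

lemma pairs_lang: "(c, d) \<in> pairs l \<Longrightarrow> l \<in> lang Y \<Longrightarrow> [c, d] \<in> lang Y"
proof (induction l rule: pairs.induct)
  case (1 a b l)
  show ?case
  proof (cases "(c, d) = (a, b)")
    case True then show ?thesis using "1.prems"(2) lang_prefix[of "[a, b]" l] by simp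
  next
    case False
    then have "(c, d) \<in> pairs (b # l)" using "1.prems"(1) by auto
    moreover have "b # l \<in> lang Y" using "1.prems"(2) lang_suffix[of "[a]" "b # l"] by simp
    ultimately show ?thesis using "1.IH" by blast
  qed
qed auto

lemma backward:
  assumes ss: "shift_space {1,2,3} X" and g: "goodsub \<sigma>" and cd: "[c, d] \<in> lang (subst_image \<sigma> X)"
  shows "\<exists>a\<in>{1,2,3}. (c, d) \<in> pairs (\<sigma> a @ [1])"
proof -
  from cd obtain y i where y0: "y \<in> subst_image \<sigma> X" "\<forall>j<Suc (Suc 0). y (i + int j) = [c, d] ! j"
    unfolding lang_def by auto
  have y: "y \<in> subst_image \<sigma> X" "y i = c" "y (i + 1) = d"
    using y0 by (auto dest: spec[of _ 0] spec[of _ 1])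
  from y(1) obtain x k where x: "x \<in> X" "k < length (\<sigma> (x 0))"
    "\<forall>m. \<forall>j<length (\<sigma> (x m)). y (cumlen \<sigma> x m + int j - int k) = \<sigma> (x m) ! j"
    unfolding subst_image_def by blast
  have xl: "\<And>m. x m \<in> {1,2,3}" using ss x(1) ss_letters by metis
  have hd1: "\<And>m. \<exists>t. \<sigma> (x m) = 1 # t" using g xl unfolding goodsub_def by blast
  have ne: "\<forall>m. \<sigma> (x m) \<noteq> []"
  proof
    fix m show "\<sigma> (x m) \<noteq> []" using hd1[of m] by auto
  qed
  obtain m j where mj: "j < length (\<sigma> (x m))" "i + int k = cumlen \<sigma> x m + int j"
    using cover[OF ne] by blast
  have ii: "cumlen \<sigma> x m + int j - int k = i" using mj by simp
  have "y i = \<sigma> (x m) ! j" using x(3)[rule_format, OF mj(1)] unfolding ii .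
  then have c: "c = (\<sigma> (x m) @ [1]) ! j" using mj y(2) by (auto simp: nth_append)
  have d: "d = (\<sigma> (x m) @ [1]) ! Suc j"
  proof (cases "Suc j < length (\<sigma> (x m))")
    case True
    have ii2: "cumlen \<sigma> x m + int (Suc j) - int k = i + 1" using mj by simp
    have "y (i + 1) = \<sigma> (x m) ! Suc j" using x(3)[THEN spec[of _ m], THEN spec[of _ "Suc j"]] True
      unfolding ii2 by blast
    then show ?thesis using True y(3) by (auto simp: nth_append)
  next
    case False
    then have j: "Suc j = length (\<sigma> (x m))" using mj by simp
    have "i + 1 = cumlen \<sigma> x (m + 1) + int 0 - int k" using j mj cumlen_Suc[of \<sigma> x m] by simp
    moreover obtain t where "\<sigma> (x (m + 1)) = 1 # t" using hd1 by blast
    ultimately have "d = 1" using x(3)[THEN spec[of _ "m + 1"], THEN spec[of _ 0]] y(3) by simp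
    then show ?thesis using j by (simp add: nth_append)
  qed
  have "Suc j < length (\<sigma> (x m) @ [1])" using mj by simp
  then have "(c, d) \<in> pairs (\<sigma> (x m) @ [1])" unfolding c d by (rule pairs_nth)
  then show ?thesis using xl by blast
qed

lemma forward_pairs:
  assumes ss: "shift_space {1,2,3} X" and g: "goodsub \<sigma>" and a: "a \<in> {1,2,3}"
    and p: "(c, d) \<in> pairs (\<sigma> a @ [1])"
  shows "[c, d] \<in> lang (subst_image \<sigma> X)"
proof -
  obtain x i where "x \<in> X" "x i = a" using ss a unfolding shift_space_def by blast
  then have "[a] \<in> lang X" unfolding lang_def by (intro CollectI bexI[of _ x] exI[of _ i]) auto
  then obtain b where ab: "[a] @ [b] \<in> lang X" using lang_ext_right by blast
  then have "b \<in> {1,2,3}" using lang_letters[OF ss ab] by simp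
  then obtain t where bt: "\<sigma> b = 1 # t" using g unfolding goodsub_def by blast
  have "concat (map \<sigma> ([a] @ [b])) \<in> lang (subst_image \<sigma> X)" using forward[OF ss g ab] .
  then have "(\<sigma> a @ [1]) @ t \<in> lang (subst_image \<sigma> X)" using bt by simp
  then have "\<sigma> a @ [1] \<in> lang (subst_image \<sigma> X)" by (rule lang_prefix)
  then show ?thesis using pairs_lang p by blast
qed

lemma pairs_char:
  assumes ss: "shift_space {1,2,3} X" and g: "goodsub \<sigma>"
  shows "[c, d] \<in> lang (subst_image \<sigma> X) \<longleftrightarrow> (\<exists>a\<in>{1,2,3}. (c, d) \<in> pairs (\<sigma> a @ [1]))"
  using backward[OF ss g] forward_pairs[OF ss g] by blast



fun wk :: "('v \<Rightarrow> 'v \<Rightarrow> bool) \<Rightarrow> 'v list \<Rightarrow> bool" where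
  "wk E (a # b # l) = (E a b \<and> wk E (b # l))"
| "wk E _ = True"

lemma all_nat_split: "(\<forall>i::nat. P i) = (P 0 \<and> (\<forall>i. P (Suc i)))"
  by (metis not0_implies_Suc)

lemma wk_iff: "wk E xs \<longleftrightarrow> (\<forall>i. Suc i < length xs \<longrightarrow> E (xs ! i) (xs ! Suc i))"
proof (induction E xs rule: wk.induct)
  case (1 E a b l)
  show ?case unfolding wk.simps 1 by (subst all_nat_split) auto
qed (auto simp: less_Suc_eq)

lemma gwalk_wk: "gwalk V E xs \<longleftrightarrow> xs \<noteq> [] \<and> set xs \<subseteq> V \<and> wk E xs"
  unfolding gwalk_def wk_iff by auto

lemma wk_snoc: "wk E (xs @ [y]) \<longleftrightarrow> wk E xs \<and> (xs \<noteq> [] \<longrightarrow> E (last xs) y)"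
  by (induction E xs rule: wk.induct) auto

lemma wk_pre: "wk E (xs @ ys) \<Longrightarrow> wk E xs"
  by (induction E xs rule: wk.induct) auto

lemma wk_suf: "wk E (xs @ ys) \<Longrightarrow> wk E ys"
proof (induction xs)
  case (Cons a xs) then show ?case by (cases xs; cases ys) auto
qed simp

lemma wk_join: "wk E (xs @ [y]) \<Longrightarrow> wk E (y # ys) \<Longrightarrow> wk E (xs @ y # ys)"
  by (induction E xs rule: wk.induct) auto

lemma wk_distinct:
  "wk E xs \<Longrightarrow> xs \<noteq> [] \<Longrightarrow> \<exists>ys. wk E ys \<and> ys \<noteq> [] \<and> hd ys = hd xs \<and> last ys = last xs \<and> distinct ys \<and> set ys \<subseteq> set xs"
proof (induction "length xs" arbitrary: xs rule: less_induct)
  case less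
  show ?case
  proof (cases "distinct xs")
    case True then show ?thesis using less.prems by (intro exI[of _ xs]) simp
  next
    case False
    obtain as y bs cs where xs: "xs = as @ [y] @ bs @ [y] @ cs" using not_distinct_decomp[OF False] by blast
    define xs' where "xs' = as @ y # cs"
    have e1: "xs = (as @ [y]) @ (bs @ [y] @ cs)" "xs = (as @ [y] @ bs) @ (y # cs)" using xs by simp_all
    have "wk E (as @ [y])" by (rule wk_pre[of E _ "bs @ [y] @ cs"]) (use less.prems(1) xs in simp)
    moreover have "wk E (y # cs)" by (rule wk_suf[of E "as @ [y] @ bs"]) (use less.prems(1) xs in simp)
    ultimately have w': "wk E xs'" unfolding xs'_def by (rule wk_join)
    have l: "length xs' < length xs" unfolding xs xs'_def by simp
    have n: "xs' \<noteq> []" unfolding xs'_def by simp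
    obtain ys where ys: "wk E ys" "ys \<noteq> []" "hd ys = hd xs'" "last ys = last xs'" "distinct ys" "set ys \<subseteq> set xs'"
      using less.hyps[OF l w' n] by blast
    have "hd xs' = hd xs" unfolding xs xs'_def by (cases as) auto
    moreover have "last xs' = last xs" unfolding xs xs'_def by (cases cs) auto
    moreover have "set xs' \<subseteq> set xs" unfolding xs xs'_def by auto
    ultimately show ?thesis using ys by (intro exI[of _ ys]) auto
  qed
qed

lemma gwalk_distinct:
  "gwalk V E xs \<Longrightarrow> \<exists>ys. gwalk V E ys \<and> hd ys = hd xs \<and> last ys = last xs \<and> distinct ys"
proof -
  assume "gwalk V E xs"
  then have "wk E xs" "xs \<noteq> []" "set xs \<subseteq> V" unfolding gwalk_wk by auto
  then obtain ys where "wk E ys" "ys \<noteq> []" "hd ys = hd xs" "last ys = last xs" "distinct ys" "set ys \<subseteq> set xs"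
    using wk_distinct by metis
  then show ?thesis using \<open>set xs \<subseteq> V\<close> unfolding gwalk_wk by (intro exI[of _ ys]) auto
qed

lemma not_conn:
  assumes "p \<in> R" "q \<in> R" "p \<in> S" "q \<notin> S" "\<And>u v. u \<in> S \<Longrightarrow> v \<in> R \<Longrightarrow> E u v \<Longrightarrow> v \<in> S"
  shows "\<not> gconnected R E"
proof
  assume "gconnected R E"
  then obtain xs where xs: "gwalk R E xs" "hd xs = p" "last xs = q" using assms unfolding gconnected_def by blast
  have "\<forall>i<length xs. xs ! i \<in> S"
  proof (intro allI)
    fix i show "i < length xs \<longrightarrow> xs ! i \<in> S"
    proof (induction i)
      case 0 then show ?case using xs assms(3) by (auto simp: hd_conv_nth gwalk_def)
    next
      case (Suc i)
      then show ?case using xs(1) assms(5) unfolding gwalk_def by (auto simp: subset_iff)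
    qed
  qed
  moreover have "xs \<noteq> []" using xs gwalk_def by auto
  ultimately have "last xs \<in> S" by (simp add: last_conv_nth)
  then show False using xs assms(4) by simp
qed

lemma lemmaC:
  assumes sym: "\<And>u v. E u v = E v u" and conn: "gconnected V E" and vV: "v \<in> V"
    and nc: "\<not> gconnected (remove_vertex V E v) E"
  shows "\<exists>u1 u2 w1 w2. u1 \<noteq> u2 \<and> u1 \<in> V \<and> u2 \<in> V \<and> E v u1 \<and> E v u2 \<and>
     w1 \<in> V \<and> w1 \<noteq> v \<and> E u1 w1 \<and> w2 \<in> V \<and> w2 \<noteq> v \<and> E u2 w2"
proof -
  let ?R = "remove_vertex V E v"
  obtain p q where pq: "p \<in> ?R" "q \<in> ?R" and nw: "\<not> (\<exists>xs. gwalk ?R E xs \<and> hd xs = p \<and> last xs = q)"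
    using nc unfolding gconnected_def by blast
  have pV: "p \<in> V" "p \<noteq> v" "q \<in> V" "q \<noteq> v" using pq unfolding remove_vertex_def by auto
  obtain xs0 where "gwalk V E xs0" "hd xs0 = p" "last xs0 = q" using conn pV unfolding gconnected_def by blast
  then obtain ys where ys: "gwalk V E ys" "hd ys = p" "last ys = q" "distinct ys"
    using gwalk_distinct by metis
  have ne: "ys \<noteq> []" and sV: "set ys \<subseteq> V" and wki: "\<And>i. Suc i < length ys \<Longrightarrow> E (ys ! i) (ys ! Suc i)"
    using ys(1) unfolding gwalk_def by auto
  show ?thesis
  proof (cases "v \<in> set ys")
    case False
    have "set ys \<subseteq> ?R"
    proof
      fix z assume "z \<in> set ys"
      then obtain i where i: "i < length ys" "ys ! i = z" by (auto simp: in_set_conv_nth)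
      show "z \<in> ?R"
      proof (cases "length ys = 1")
        case True
        then have "z = p" using i ys(2) ne by (auto simp: hd_conv_nth)
        then show ?thesis using pq by simp
      next
        case False
        have zV: "z \<in> V" "z \<noteq> v" using i sV \<open>v \<notin> set ys\<close> by (auto simp: nth_mem)
        show ?thesis
        proof (cases "Suc i < length ys")
          case True
          then have "E z (ys ! Suc i)" "ys ! Suc i \<in> V - {v}" using wki i sV \<open>v \<notin> set ys\<close> nth_mem by fastforce+
          then show ?thesis using zV unfolding remove_vertex_def by blast
        next
          case F2: False
          then obtain i' where i': "i = Suc i'" using False i ne by (cases i) auto
          then have "E (ys ! i') z" using wki i by auto
          moreover have "ys ! i' \<in> V - {v}" using i i' sV \<open>v \<notin> set ys\<close> nth_mem by fastforce
          ultimately show ?thesis using zV sym unfolding remove_vertex_def by blast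
        qed
      qed
    qed
    then have "gwalk ?R E ys" using ys(1) unfolding gwalk_def by auto
    then show ?thesis using nw ys by blast
  next
    case True
    then obtain i where i: "i < length ys" "ys ! i = v" by (auto simp: in_set_conv_nth)
    have "i \<noteq> 0"
    proof
      assume "i = 0" then have "v = p" using i ys(2) ne by (simp add: hd_conv_nth)
      then show False using pV by simp
    qed
    then obtain i' where i': "i = Suc i'" by (cases i) auto
    have "Suc i < length ys"
    proof (rule ccontr)
      assume "\<not> Suc i < length ys"
      then have "i = length ys - 1" using i by simp
      then have "last ys = v" using i ne by (simp add: last_conv_nth)
      then show False using ys pV by simp
    qed
    define u1 where "u1 = ys ! i'"
    define u2 where "u2 = ys ! Suc i"
    have u12: "u1 \<noteq> u2" unfolding u1_def u2_def using ys(4) \<open>Suc i < length ys\<close> i' by (simp add: nth_eq_iff_index_eq)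
    have E1: "E v u1" using wki[of i'] i i' sym unfolding u1_def by auto
    have E2: "E v u2" using wki[of i] i \<open>Suc i < length ys\<close> unfolding u2_def by auto
    have uV: "u1 \<in> V" "u2 \<in> V" using sV i i' \<open>Suc i < length ys\<close> unfolding u1_def u2_def by (auto simp: nth_mem subset_iff)
    have "\<exists>w1. w1 \<in> V \<and> w1 \<noteq> v \<and> E u1 w1"
    proof (cases i')
      case 0
      then have "u1 = p" unfolding u1_def using ys(2) ne by (simp add: hd_conv_nth)
      then show ?thesis using pq unfolding remove_vertex_def by blast
    next
      case (Suc i'')
      have "E (ys ! i'') u1" using wki[of i''] i i' Suc unfolding u1_def by auto
      moreover have "ys ! i'' \<noteq> v" using ys(4) i i' Suc nth_eq_iff_index_eq[of ys i'' i] by auto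
      moreover have "ys ! i'' \<in> V" using sV i i' Suc by (auto simp: nth_mem subset_iff)
      ultimately show ?thesis using sym by blast
    qed
    moreover have "\<exists>w2. w2 \<in> V \<and> w2 \<noteq> v \<and> E u2 w2"
    proof (cases "Suc (Suc i) < length ys")
      case False
      then have "Suc i = length ys - 1" using \<open>Suc i < length ys\<close> by simp
      then have "u2 = q" unfolding u2_def using ys(3) ne by (simp add: last_conv_nth)
      then show ?thesis using pq unfolding remove_vertex_def by blast
    next
      case True
      have "E u2 (ys ! Suc (Suc i))" using wki True unfolding u2_def by auto
      moreover have "ys ! Suc (Suc i) \<noteq> v" using ys(4) i True nth_eq_iff_index_eq[of ys "Suc (Suc i)" i] by auto
      moreover have "ys ! Suc (Suc i) \<in> V" using sV True by (auto simp: nth_mem subset_iff)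
      ultimately show ?thesis by blast
    qed
    ultimately show ?thesis using u12 E1 E2 uV by blast
  qed
qed

lemma lemmaT:
  assumes sym: "\<And>u v. E u v = E v u" and irr: "\<And>u. \<not> E u u" and tr: "gtree V E" and vV: "v \<in> V"
    and "u1 \<noteq> u2" "u1 \<in> V" "u2 \<in> V" "E v u1" "E v u2"
    "w1 \<in> V" "w1 \<noteq> v" "E u1 w1" "w2 \<in> V" "w2 \<noteq> v" "E u2 w2"
  shows "\<not> gconnected (remove_vertex V E v) E"
proof
  let ?R = "remove_vertex V E v"
  assume c: "gconnected ?R E"
  have "u1 \<noteq> v" "u2 \<noteq> v" using assms irr by auto
  then have "u1 \<in> ?R" "u2 \<in> ?R" using assms unfolding remove_vertex_def by auto
  then obtain xs where "gwalk ?R E xs" "hd xs = u1" "last xs = u2" using c unfolding gconnected_def by blast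
  then obtain ys where ys: "gwalk ?R E ys" "hd ys = u1" "last ys = u2" "distinct ys"
    using gwalk_distinct by metis
  have ne: "ys \<noteq> []" and sR: "set ys \<subseteq> ?R" and wy: "wk E ys" using ys(1) unfolding gwalk_wk by auto
  have sV: "set ys \<subseteq> V" "v \<notin> set ys" using sR unfolding remove_vertex_def by auto
  obtain y0 ys' where y0: "ys = y0 # ys'" using ne by (cases ys) auto
  have "ys' \<noteq> []" using y0 ys \<open>u1 \<noteq> u2\<close> by auto
  define cyc where "cyc = v # ys @ [v]"
  have "E (last ys) v" using ys(3) assms(9) sym by metis
  then have "wk E (ys @ [v])" using wy ne by (simp add: wk_snoc)
  then have "wk E (v # (y0 # ys') @ [v])" using y0 ys(2) assms(8) by simp
  then have "wk E cyc" unfolding cyc_def using y0 by simp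
  then have "gwalk V E cyc" unfolding gwalk_wk cyc_def using sV vV by auto
  moreover have "length cyc \<ge> 4" unfolding cyc_def using y0 \<open>ys' \<noteq> []\<close> by (cases ys') auto
  moreover have "hd cyc = last cyc" unfolding cyc_def by simp
  moreover have "distinct (tl cyc)" unfolding cyc_def using ys(4) sV by simp
  ultimately have "gcycle V E cyc" unfolding gcycle_def by blast
  then show False using tr unfolding gtree_def by blast
qed



lemma ext_adj_sym: "ext_adj X w u v = ext_adj X w v u"
  by (cases u; cases v) auto
lemma ext_adj_irr: "\<not> ext_adj X w u u" by (cases u) auto

lemma ext_adj_InlE: "ext_adj X w (Inl a) v \<Longrightarrow> \<exists>b. v = Inr b \<and> a # w @ [b] \<in> lang X"
  by (cases v) auto
lemma ext_adj_InrE: "ext_adj X w (Inr b) v \<Longrightarrow> \<exists>a. v = Inl a \<and> a # w @ [b] \<in> lang X"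
  by (cases v) auto

lemma edge_vert: "a # w @ [b] \<in> lang Y \<Longrightarrow> Inl a \<in> ext_vertices Y w \<and> Inr b \<in> ext_vertices Y w"
proof -
  assume h: "a # w @ [b] \<in> lang Y"
  have "(a # w) @ [b] \<in> lang Y" using h by simp
  then have "a # w \<in> lang Y" by (rule lang_prefix)
  moreover have "[a] @ (w @ [b]) \<in> lang Y" using h by simp
  then have "w @ [b] \<in> lang Y" by (rule lang_suffix)
  ultimately show ?thesis unfolding ext_vertices_def ext_left_def ext_right_def by auto
qed

lemma extract_left:
  assumes "dendric_shift X" "w \<in> lang X" "a \<in> C_left_word X w"
  shows "\<exists>b1 b2 a1 a2. b1 \<noteq> b2 \<and> a1 \<noteq> a \<and> a2 \<noteq> a \<and> a # w @ [b1] \<in> lang X \<and> a # w @ [b2] \<in> lang X \<and>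
     a1 # w @ [b1] \<in> lang X \<and> a2 # w @ [b2] \<in> lang X"
proof -
  have conn: "gconnected (ext_vertices X w) (ext_adj X w)"
    using assms(1,2) unfolding dendric_shift_def dendric_word_def gtree_def by blast
  have aV: "Inl a \<in> ext_vertices X w" using assms(3) unfolding C_left_word_def ext_vertices_def by auto
  have nc: "\<not> gconnected (remove_vertex (ext_vertices X w) (ext_adj X w) (Inl a)) (ext_adj X w)"
    using assms(3) unfolding C_left_word_def by auto
  obtain u1 u2 w1 w2 where H: "u1 \<noteq> u2" "ext_adj X w (Inl a) u1" "ext_adj X w (Inl a) u2"
     "w1 \<noteq> Inl a" "ext_adj X w u1 w1" "w2 \<noteq> Inl a" "ext_adj X w u2 w2"
    using lemmaC[of "ext_adj X w", OF ext_adj_sym conn aV nc] by blast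
  obtain b1 where b1: "u1 = Inr b1" "a # w @ [b1] \<in> lang X" using ext_adj_InlE[OF H(2)] by blast
  obtain b2 where b2: "u2 = Inr b2" "a # w @ [b2] \<in> lang X" using ext_adj_InlE[OF H(3)] by blast
  obtain a1 where a1: "w1 = Inl a1" "a1 # w @ [b1] \<in> lang X" using ext_adj_InrE H(5) b1(1) by blast
  obtain a2 where a2: "w2 = Inl a2" "a2 # w @ [b2] \<in> lang X" using ext_adj_InrE H(7) b2(1) by blast
  show ?thesis using H b1 b2 a1 a2 by blast
qed

lemma extract_right:
  assumes "dendric_shift X" "w \<in> lang X" "b \<in> C_right_word X w"
  shows "\<exists>a1 a2 b1 b2. a1 \<noteq> a2 \<and> b1 \<noteq> b \<and> b2 \<noteq> b \<and> a1 # w @ [b] \<in> lang X \<and> a2 # w @ [b] \<in> lang X \<and>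
     a1 # w @ [b1] \<in> lang X \<and> a2 # w @ [b2] \<in> lang X"
proof -
  have conn: "gconnected (ext_vertices X w) (ext_adj X w)"
    using assms(1,2) unfolding dendric_shift_def dendric_word_def gtree_def by blast
  have aV: "Inr b \<in> ext_vertices X w" using assms(3) unfolding C_right_word_def ext_vertices_def by auto
  have nc: "\<not> gconnected (remove_vertex (ext_vertices X w) (ext_adj X w) (Inr b)) (ext_adj X w)"
    using assms(3) unfolding C_right_word_def by auto
  obtain u1 u2 w1 w2 where H: "u1 \<noteq> u2" "ext_adj X w (Inr b) u1" "ext_adj X w (Inr b) u2"
     "w1 \<noteq> Inr b" "ext_adj X w u1 w1" "w2 \<noteq> Inr b" "ext_adj X w u2 w2"
    using lemmaC[of "ext_adj X w", OF ext_adj_sym conn aV nc] by blast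
  obtain a1 where a1: "u1 = Inl a1" "a1 # w @ [b] \<in> lang X" using ext_adj_InrE[OF H(2)] by blast
  obtain a2 where a2: "u2 = Inl a2" "a2 # w @ [b] \<in> lang X" using ext_adj_InrE[OF H(3)] by blast
  obtain b1 where b1: "w1 = Inr b1" "a1 # w @ [b1] \<in> lang X" using ext_adj_InlE H(5) a1(1) by blast
  obtain b2 where b2: "w2 = Inr b2" "a2 # w @ [b2] \<in> lang X" using ext_adj_InlE H(7) a2(1) by blast
  show ?thesis using H b1 b2 a1 a2 by blast
qed

lemma transfer_left:
  assumes DP: "\<sigma> \<in> DP X" and w: "w \<in> lang X"
    and u: "u = s @ concat (map \<sigma> w) @ p" "strict_suffix s (\<sigma> a0)" "p \<noteq> []" "prefix p (\<sigma> b0)"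
       "a0 # w @ [b0] \<in> lang X" "1 \<in> set u"
    and e1: "la # u @ [r1] \<in> lang (subst_image \<sigma> X)" and e2: "la # u @ [r2] \<in> lang (subst_image \<sigma> X)"
    and e3: "l1 # u @ [r1] \<in> lang (subst_image \<sigma> X)" and e4: "l2 # u @ [r2] \<in> lang (subst_image \<sigma> X)"
    and d: "r1 \<noteq> r2" "l1 \<noteq> la" "l2 \<noteq> la"
  shows "C_left (subst_image \<sigma> X) \<noteq> {}"
proof -
  let ?Y = "subst_image \<sigma> X"
  have uY: "u \<in> lang ?Y" using e1 lang_infix[of "[la]" u "[r1]"] by simp
  have une: "u \<noteq> []" using u(6) by auto
  have ext: "extended_image \<sigma> X u w" unfolding extended_image_def using uY une u w by blast
  have v1: "Inl la \<in> ext_vertices ?Y u" "Inr r1 \<in> ext_vertices ?Y u" using edge_vert[OF e1] by auto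
  have v2: "Inr r2 \<in> ext_vertices ?Y u" using edge_vert[OF e2] by auto
  have v3: "Inl l1 \<in> ext_vertices ?Y u" using edge_vert[OF e3] by auto
  have v4: "Inl l2 \<in> ext_vertices ?Y u" using edge_vert[OF e4] by auto
  have bis: "bispecial ?Y u" unfolding bispecial_def
    using v1 v2 v3 d unfolding ext_vertices_def by blast
  have "dendric_word ?Y u" using DP w ext bis unfolding DP_def by blast
  then have tr: "gtree (ext_vertices ?Y u) (ext_adj ?Y u)" unfolding dendric_word_def .
  have "\<not> gconnected (remove_vertex (ext_vertices ?Y u) (ext_adj ?Y u) (Inl la)) (ext_adj ?Y u)"
    by (rule lemmaT[of "ext_adj ?Y u", OF ext_adj_sym ext_adj_irr tr v1(1), of "Inr r1" "Inr r2" "Inl l1" "Inl l2"])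
      (use v1 v2 v3 v4 e1 e2 e3 e4 d in auto)
  moreover have "la \<in> ext_left ?Y u" using v1 unfolding ext_vertices_def by auto
  ultimately have "la \<in> C_left_word ?Y u" unfolding C_left_word_def by blast
  then show ?thesis using uY unfolding C_left_def by blast
qed

lemma transfer_right:
  assumes DP: "\<sigma> \<in> DP X" and w: "w \<in> lang X"
    and u: "u = s @ concat (map \<sigma> w) @ p" "strict_suffix s (\<sigma> a0)" "p \<noteq> []" "prefix p (\<sigma> b0)"
       "a0 # w @ [b0] \<in> lang X" "1 \<in> set u"
    and e1: "l1 # u @ [rb] \<in> lang (subst_image \<sigma> X)" and e2: "l2 # u @ [rb] \<in> lang (subst_image \<sigma> X)"
    and e3: "l1 # u @ [r1] \<in> lang (subst_image \<sigma> X)" and e4: "l2 # u @ [r2] \<in> lang (subst_image \<sigma> X)"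
    and d: "l1 \<noteq> l2" "r1 \<noteq> rb" "r2 \<noteq> rb"
  shows "C_right (subst_image \<sigma> X) \<noteq> {}"
proof -
  let ?Y = "subst_image \<sigma> X"
  have uY: "u \<in> lang ?Y" using e1 lang_infix[of "[l1]" u "[rb]"] by simp
  have une: "u \<noteq> []" using u(6) by auto
  have ext: "extended_image \<sigma> X u w" unfolding extended_image_def using uY une u w by blast
  have v1: "Inl l1 \<in> ext_vertices ?Y u" "Inr rb \<in> ext_vertices ?Y u" using edge_vert[OF e1] by auto
  have v2: "Inl l2 \<in> ext_vertices ?Y u" using edge_vert[OF e2] by auto
  have v3: "Inr r1 \<in> ext_vertices ?Y u" using edge_vert[OF e3] by auto
  have v4: "Inr r2 \<in> ext_vertices ?Y u" using edge_vert[OF e4] by auto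
  have bis: "bispecial ?Y u" unfolding bispecial_def
    using v1 v2 v3 d unfolding ext_vertices_def by blast
  have "dendric_word ?Y u" using DP w ext bis unfolding DP_def by blast
  then have tr: "gtree (ext_vertices ?Y u) (ext_adj ?Y u)" unfolding dendric_word_def .
  have "\<not> gconnected (remove_vertex (ext_vertices ?Y u) (ext_adj ?Y u) (Inr rb)) (ext_adj ?Y u)"
    by (rule lemmaT[of "ext_adj ?Y u", OF ext_adj_sym ext_adj_irr tr v1(2), of "Inl l1" "Inl l2" "Inr r1" "Inr r2"])
      (use v1 v2 v3 v4 e1 e2 e3 e4 d in auto)
  moreover have "rb \<in> ext_right ?Y u" using v1 unfolding ext_vertices_def by auto
  ultimately have "rb \<in> C_right_word ?Y u" unfolding C_right_word_def by blast
  then show ?thesis using uY unfolding C_right_def by blast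
qed

lemma edgeG:
  assumes ss: "shift_space {1,2,3} X" and g: "goodsub \<sigma>" and h: "a' # w @ [b, c] \<in> lang X"
  shows "drop i (\<sigma> a') @ concat (map \<sigma> w) @ take j (\<sigma> b @ \<sigma> c) \<in> lang (subst_image \<sigma> X)"
proof -
  have "concat (map \<sigma> (a' # w @ [b, c])) \<in> lang (subst_image \<sigma> X)" by (rule forward[OF ss g h])
  then have "\<sigma> a' @ concat (map \<sigma> w) @ (\<sigma> b @ \<sigma> c) \<in> lang (subst_image \<sigma> X)" by simp
  moreover
  define A where "A = \<sigma> a'"
  define B where "B = \<sigma> b @ \<sigma> c"
  define W where "W = concat (map \<sigma> w)"
  have "A @ W @ B = take i A @ (drop i A @ W @ take j B) @ drop j B"
    by (metis append.assoc append_take_drop_id)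
  ultimately have "take i A @ (drop i A @ W @ take j B) @ drop j B \<in> lang (subst_image \<sigma> X)"
    unfolding A_def B_def W_def by simp
  then show ?thesis unfolding A_def B_def W_def by (rule lang_infix)
qed

lemma edge_ext:
  assumes ss: "shift_space {1,2,3} X" and h: "a' # w @ [b] \<in> lang X"
  shows "\<exists>c. a' # w @ [b, c] \<in> lang X \<and> c \<in> {1,2,3} \<and> a' \<in> {1,2,3} \<and> b \<in> {1,2,3}"
proof -
  obtain c where c: "(a' # w @ [b]) @ [c] \<in> lang X" using lang_ext_right[OF h] by blast
  have "set ((a' # w @ [b]) @ [c]) \<subseteq> {1,2,3}" by (rule lang_letters[OF ss c])
  then show ?thesis using c by auto
qed



lemma good_alpha: "goodsub alpha_s" by (simp add: goodsub_def alpha_s_def subst3_def)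
lemma good_beta: "goodsub beta_s" by (simp add: goodsub_def beta_s_def subst3_def)
lemma good_gamma: "goodsub gamma_s" by (simp add: goodsub_def gamma_s_def subst3_def)

lemma edge_alpha:
  assumes ss: "shift_space {1,2,3} X" and h: "a' # w @ [b] \<in> lang X"
  shows "a' # concat (map alpha_s w) @ [1, b] \<in> lang (subst_image alpha_s X)"
proof -
  obtain c where c: "a' # w @ [b, c] \<in> lang X" "c \<in> {1,2,3}" "a' \<in> {1,2,3}" "b \<in> {1,2,3}"
    using edge_ext[OF ss h] by blast
  have G: "drop (length (alpha_s a') - 1) (alpha_s a') @ concat (map alpha_s w) @ take 2 (alpha_s b @ alpha_s c)
     \<in> lang (subst_image alpha_s X)" by (rule edgeG[OF ss good_alpha c(1)])
  show ?thesis using G c(2-4) by (auto simp: alpha_s_def subst3_def)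
qed

lemma edge_gamma1:
  assumes ss: "shift_space {1,2,3} X" and h: "a' # w @ [b] \<in> lang X"
  shows "a' # concat (map gamma_s w) @ [1, if b = 1 then 1 else 2] \<in> lang (subst_image gamma_s X)"
proof -
  obtain c where c: "a' # w @ [b, c] \<in> lang X" "c \<in> {1,2,3}" "a' \<in> {1,2,3}" "b \<in> {1,2,3}"
    using edge_ext[OF ss h] by blast
  have G: "drop (length (gamma_s a') - 1) (gamma_s a') @ concat (map gamma_s w) @ take 2 (gamma_s b @ gamma_s c)
     \<in> lang (subst_image gamma_s X)" by (rule edgeG[OF ss good_gamma c(1)])
  show ?thesis using G c(2-4) by (auto simp: gamma_s_def subst3_def)
qed

lemma edge_gamma2:
  assumes ss: "shift_space {1,2,3} X" and h: "a' # w @ [b] \<in> lang X" and b: "b \<noteq> 1"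
  shows "a' # concat (map gamma_s w) @ [1, 2, if b = 2 then 1 else 3] \<in> lang (subst_image gamma_s X)"
proof -
  obtain c where c: "a' # w @ [b, c] \<in> lang X" "c \<in> {1,2,3}" "a' \<in> {1,2,3}" "b \<in> {1,2,3}"
    using edge_ext[OF ss h] by blast
  have G: "drop (length (gamma_s a') - 1) (gamma_s a') @ concat (map gamma_s w) @ take 3 (gamma_s b @ gamma_s c)
     \<in> lang (subst_image gamma_s X)" by (rule edgeG[OF ss good_gamma c(1)])
  show ?thesis using G c(2-4) b by (auto simp: gamma_s_def subst3_def)
qed

lemma edge_beta1:
  assumes ss: "shift_space {1,2,3} X" and h: "a' # w @ [b] \<in> lang X"
  shows "(if a' = 1 then 1 else 2) # concat (map beta_s w) @ [1, b] \<in> lang (subst_image beta_s X)"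
proof -
  obtain c where c: "a' # w @ [b, c] \<in> lang X" "c \<in> {1,2,3}" "a' \<in> {1,2,3}" "b \<in> {1,2,3}"
    using edge_ext[OF ss h] by blast
  have G: "drop (length (beta_s a') - 1) (beta_s a') @ concat (map beta_s w) @ take 2 (beta_s b @ beta_s c)
     \<in> lang (subst_image beta_s X)" by (rule edgeG[OF ss good_beta c(1)])
  show ?thesis using G c(2-4) by (auto simp: beta_s_def subst3_def)
qed

lemma edge_beta2:
  assumes ss: "shift_space {1,2,3} X" and h: "a' # w @ [b] \<in> lang X" and a: "a' \<noteq> 1"
  shows "(if a' = 2 then 1 else 3) # 2 # concat (map beta_s w) @ [1, b] \<in> lang (subst_image beta_s X)"
proof -
  obtain c where c: "a' # w @ [b, c] \<in> lang X" "c \<in> {1,2,3}" "a' \<in> {1,2,3}" "b \<in> {1,2,3}"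
    using edge_ext[OF ss h] by blast
  have G: "drop (length (beta_s a') - 2) (beta_s a') @ concat (map beta_s w) @ take 2 (beta_s b @ beta_s c)
     \<in> lang (subst_image beta_s X)" by (rule edgeG[OF ss good_beta c(1)])
  show ?thesis using G c(2-4) a by (auto simp: beta_s_def subst3_def)
qed



lemma pairs_rep: "pairs (c # replicate n c @ [d]) = (if n = 0 then {(c, d)} else {(c, c), (c, d)})"
  by (induction n) auto

lemma good_eta: "goodsub eta_s" by (simp add: goodsub_def eta_s_def subst3_def)
lemma good_delta: "goodsub (delta_s k)" by (simp add: goodsub_def delta_s_def subst3_def)
lemma good_zeta: "goodsub (zeta_s k)" by (simp add: goodsub_def zeta_s_def subst3_def)

lemma P_beta: "shift_space {1,2,3} X \<Longrightarrow>
  [c, d] \<in> lang (subst_image beta_s X) \<longleftrightarrow> (c, d) \<in> {(1,1),(1,2),(2,1),(1,3),(3,2)}"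
  by (subst pairs_char[OF _ good_beta]) (auto simp: beta_s_def subst3_def)

lemma P_gamma: "shift_space {1,2,3} X \<Longrightarrow>
  [c, d] \<in> lang (subst_image gamma_s X) \<longleftrightarrow> (c, d) \<in> {(1,1),(1,2),(2,1),(2,3),(3,1)}"
  by (subst pairs_char[OF _ good_gamma]) (auto simp: gamma_s_def subst3_def)

lemma P_eta: "shift_space {1,2,3} X \<Longrightarrow>
  [c, d] \<in> lang (subst_image eta_s X) \<longleftrightarrow> (c, d) \<in> {(1,3),(3,1),(1,2),(2,1),(2,3)}"
  by (subst pairs_char[OF _ good_eta]) (auto simp: eta_s_def subst3_def)

lemma P_delta: "shift_space {1,2,3} X \<Longrightarrow> k \<ge> 1 \<Longrightarrow>
  [c, d] \<in> lang (subst_image (delta_s k) X) \<longleftrightarrow> (c, d) \<in> {(1,1),(1,2),(2,3),(3,3),(3,1)}"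
  apply (subst pairs_char[OF _ good_delta], assumption)
  apply (cases k, simp)
  apply (auto simp: delta_s_def subst3_def pairs_rep split: if_splits)
  done

lemma P_zeta: "shift_space {1,2,3} X \<Longrightarrow> k \<ge> 1 \<Longrightarrow>
  [c, d] \<in> lang (subst_image (zeta_s k) X) \<longleftrightarrow> (c, d) \<in> {(1,3),(3,3),(3,1),(1,2),(2,1)}"
  apply (subst pairs_char[OF _ good_zeta], assumption)
  apply (cases k, simp)
  apply (auto simp: zeta_s_def subst3_def pairs_rep split: if_splits)
  done


lemma single1: "[c, d] \<in> lang Y \<Longrightarrow> [c] \<in> lang Y"
  using lang_prefix[of "[c]" "[d]"] by simp
lemma single2: "[c, d] \<in> lang Y \<Longrightarrow> [d] \<in> lang Y"
  using lang_suffix[of "[c]" "[d]"] by simp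

lemma V_nil: "Inl c \<in> ext_vertices Y [] \<longleftrightarrow> [c] \<in> lang Y" "Inr d \<in> ext_vertices Y [] \<longleftrightarrow> [d] \<in> lang Y"
  by (auto simp: ext_vertices_def ext_left_def ext_right_def)

lemma Y_nil: assumes ss: "shift_space {1,2,3} X" and g: "goodsub \<sigma>" shows "[] \<in> lang (subst_image \<sigma> X)"
proof -
  obtain x i where "x \<in> X" using ss unfolding shift_space_def by blast
  then have "[] \<in> lang X" unfolding lang_def by auto
  then show ?thesis using forward[OF ss g] by fastforce
qed

lemma disc_left:
  fixes Y :: "(int \<Rightarrow> nat) set" and S :: "(nat + nat) set"
  assumes "[] \<in> lang Y" "[a] \<in> lang Y"
    "p \<in> ext_vertices Y []" "p \<noteq> Inl a" "pn \<in> ext_vertices Y []" "pn \<noteq> Inl a" "ext_adj Y [] p pn"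
    "q \<in> ext_vertices Y []" "q \<noteq> Inl a" "qn \<in> ext_vertices Y []" "qn \<noteq> Inl a" "ext_adj Y [] q qn"
    "p \<in> S" "q \<notin> S" "\<And>u v. u \<in> S \<Longrightarrow> v \<in> ext_vertices Y [] \<Longrightarrow> v \<noteq> Inl a \<Longrightarrow> ext_adj Y [] u v \<Longrightarrow> v \<in> S"
  shows "C_left Y \<noteq> {}"
proof -
  let ?R = "remove_vertex (ext_vertices Y []) (ext_adj Y []) (Inl a)"
  have "\<not> gconnected ?R (ext_adj Y [])"
  proof (rule not_conn[of p ?R q S])
    show "p \<in> ?R" using assms(3-7) unfolding remove_vertex_def by blast
    show "q \<in> ?R" using assms(8-12) unfolding remove_vertex_def by blast
  qed (use assms(13-15) in \<open>auto simp: remove_vertex_def\<close>)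
  moreover have "a \<in> ext_left Y []" using assms(2) by (simp add: ext_left_def)
  ultimately have "a \<in> C_left_word Y []" unfolding C_left_word_def by blast
  then show ?thesis using assms(1) unfolding C_left_def by blast
qed

lemma disc_right:
  fixes Y :: "(int \<Rightarrow> nat) set" and S :: "(nat + nat) set"
  assumes "[] \<in> lang Y" "[a] \<in> lang Y"
    "p \<in> ext_vertices Y []" "p \<noteq> Inr a" "pn \<in> ext_vertices Y []" "pn \<noteq> Inr a" "ext_adj Y [] p pn"
    "q \<in> ext_vertices Y []" "q \<noteq> Inr a" "qn \<in> ext_vertices Y []" "qn \<noteq> Inr a" "ext_adj Y [] q qn"
    "p \<in> S" "q \<notin> S" "\<And>u v. u \<in> S \<Longrightarrow> v \<in> ext_vertices Y [] \<Longrightarrow> v \<noteq> Inr a \<Longrightarrow> ext_adj Y [] u v \<Longrightarrow> v \<in> S"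
  shows "C_right Y \<noteq> {}"
proof -
  let ?R = "remove_vertex (ext_vertices Y []) (ext_adj Y []) (Inr a)"
  have "\<not> gconnected ?R (ext_adj Y [])"
  proof (rule not_conn[of p ?R q S])
    show "p \<in> ?R" using assms(3-7) unfolding remove_vertex_def by blast
    show "q \<in> ?R" using assms(8-12) unfolding remove_vertex_def by blast
  qed (use assms(13-15) in \<open>auto simp: remove_vertex_def\<close>)
  moreover have "a \<in> ext_right Y []" using assms(2) by (simp add: ext_right_def)
  ultimately have "a \<in> C_right_word Y []" unfolding C_right_word_def by blast
  then show ?thesis using assms(1) unfolding C_right_def by blast
qed

lemma beta_left:
  assumes ss: "shift_space {1,2,3} X"
  shows "C_left (subst_image beta_s X) \<noteq> {}"
proof -
  note P = P_beta[OF ss]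
  have sg: "[1] \<in> lang (subst_image beta_s X)" "[2] \<in> lang (subst_image beta_s X)" "[3] \<in> lang (subst_image beta_s X)"
    using single1[OF P[of 1 1, THEN iffD2]] single2[OF P[of 1 1, THEN iffD2]] single1[OF P[of 2 1, THEN iffD2]] single2[OF P[of 2 1, THEN iffD2]] single1[OF P[of 3 2, THEN iffD2]] single2[OF P[of 3 2, THEN iffD2]] by auto
  show ?thesis
  proof (rule disc_left[where a=1 and p="Inl 2" and pn="Inr 1" and q="Inl 3" and qn="Inr 2" and S="{Inl 2, Inr 1}"])
    show "[] \<in> lang (subst_image beta_s X)" by (rule Y_nil[OF ss good_beta])
  next
    fix u v
    assume "u \<in> {Inl 2, Inr 1}" "v \<in> ext_vertices (subst_image beta_s X) []" "v \<noteq> Inl 1"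
      "ext_adj (subst_image beta_s X) [] u v"
    then show "v \<in> {Inl 2, Inr 1}" by (cases v) (auto simp: P)
  qed (use sg in \<open>auto simp: P V_nil\<close>)
qed

lemma delta_left:
  assumes ss: "shift_space {1,2,3} X" and k: "k \<ge> 1"
  shows "C_left (subst_image (delta_s k) X) \<noteq> {}"
proof -
  note P = P_delta[OF ss k]
  have sg: "[1] \<in> lang (subst_image (delta_s k) X)" "[2] \<in> lang (subst_image (delta_s k) X)" "[3] \<in> lang (subst_image (delta_s k) X)"
    using single1[OF P[of 1 1, THEN iffD2]] single2[OF P[of 1 1, THEN iffD2]] single1[OF P[of 2 3, THEN iffD2]] single2[OF P[of 2 3, THEN iffD2]] single1[OF P[of 3 1, THEN iffD2]] single2[OF P[of 3 1, THEN iffD2]] by auto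
  show ?thesis
  proof (rule disc_left[where a=3 and p="Inl 1" and pn="Inr 1" and q="Inl 2" and qn="Inr 3" and S="{Inl 1, Inr 1, Inr 2}"])
    show "[] \<in> lang (subst_image (delta_s k) X)" by (rule Y_nil[OF ss good_delta])
  next
    fix u v
    assume "u \<in> {Inl 1, Inr 1, Inr 2}" "v \<in> ext_vertices (subst_image (delta_s k) X) []" "v \<noteq> Inl 3"
      "ext_adj (subst_image (delta_s k) X) [] u v"
    then show "v \<in> {Inl 1, Inr 1, Inr 2}" by (cases v) (auto simp: P)
  qed (use sg in \<open>auto simp: P V_nil\<close>)
qed

lemma zeta_left:
  assumes ss: "shift_space {1,2,3} X" and k: "k \<ge> 1"
  shows "C_left (subst_image (zeta_s k) X) \<noteq> {}"
proof -
  note P = P_zeta[OF ss k]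
  have sg: "[1] \<in> lang (subst_image (zeta_s k) X)" "[2] \<in> lang (subst_image (zeta_s k) X)" "[3] \<in> lang (subst_image (zeta_s k) X)"
    using single1[OF P[of 1 2, THEN iffD2]] single2[OF P[of 1 2, THEN iffD2]] single1[OF P[of 2 1, THEN iffD2]] single2[OF P[of 2 1, THEN iffD2]] single1[OF P[of 3 1, THEN iffD2]] single2[OF P[of 3 1, THEN iffD2]] by auto
  show ?thesis
  proof (rule disc_left[where a=3 and p="Inl 1" and pn="Inr 2" and q="Inl 2" and qn="Inr 1" and S="{Inl 1, Inr 2, Inr 3}"])
    show "[] \<in> lang (subst_image (zeta_s k) X)" by (rule Y_nil[OF ss good_zeta])
  next
    fix u v
    assume "u \<in> {Inl 1, Inr 2, Inr 3}" "v \<in> ext_vertices (subst_image (zeta_s k) X) []" "v \<noteq> Inl 3"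
      "ext_adj (subst_image (zeta_s k) X) [] u v"
    then show "v \<in> {Inl 1, Inr 2, Inr 3}" by (cases v) (auto simp: P)
  qed (use sg in \<open>auto simp: P V_nil\<close>)
qed

lemma eta_left:
  assumes ss: "shift_space {1,2,3} X"
  shows "C_left (subst_image eta_s X) \<noteq> {}"
proof -
  note P = P_eta[OF ss]
  have sg: "[1] \<in> lang (subst_image eta_s X)" "[2] \<in> lang (subst_image eta_s X)" "[3] \<in> lang (subst_image eta_s X)"
    using single1[OF P[of 1 2, THEN iffD2]] single2[OF P[of 1 2, THEN iffD2]] single1[OF P[of 2 1, THEN iffD2]] single2[OF P[of 2 1, THEN iffD2]] single1[OF P[of 3 1, THEN iffD2]] single2[OF P[of 3 1, THEN iffD2]] by auto
  show ?thesis
  proof (rule disc_left[where a=2 and p="Inl 1" and pn="Inr 2" and q="Inl 3" and qn="Inr 1" and S="{Inl 1, Inr 2, Inr 3}"])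
    show "[] \<in> lang (subst_image eta_s X)" by (rule Y_nil[OF ss good_eta])
  next
    fix u v
    assume "u \<in> {Inl 1, Inr 2, Inr 3}" "v \<in> ext_vertices (subst_image eta_s X) []" "v \<noteq> Inl 2"
      "ext_adj (subst_image eta_s X) [] u v"
    then show "v \<in> {Inl 1, Inr 2, Inr 3}" by (cases v) (auto simp: P)
  qed (use sg in \<open>auto simp: P V_nil\<close>)
qed

lemma gamma_right:
  assumes ss: "shift_space {1,2,3} X"
  shows "C_right (subst_image gamma_s X) \<noteq> {}"
proof -
  note P = P_gamma[OF ss]
  have sg: "[1] \<in> lang (subst_image gamma_s X)" "[2] \<in> lang (subst_image gamma_s X)" "[3] \<in> lang (subst_image gamma_s X)"
    using single1[OF P[of 1 1, THEN iffD2]] single2[OF P[of 1 1, THEN iffD2]] single1[OF P[of 1 2, THEN iffD2]] single2[OF P[of 1 2, THEN iffD2]] single1[OF P[of 2 3, THEN iffD2]] single2[OF P[of 2 3, THEN iffD2]] by auto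
  show ?thesis
  proof (rule disc_right[where a=1 and p="Inr 2" and pn="Inl 1" and q="Inr 3" and qn="Inl 2" and S="{Inr 2, Inl 1}"])
    show "[] \<in> lang (subst_image gamma_s X)" by (rule Y_nil[OF ss good_gamma])
  next
    fix u v
    assume "u \<in> {Inr 2, Inl 1}" "v \<in> ext_vertices (subst_image gamma_s X) []" "v \<noteq> Inr 1"
      "ext_adj (subst_image gamma_s X) [] u v"
    then show "v \<in> {Inr 2, Inl 1}" by (cases v) (auto simp: P)
  qed (use sg in \<open>auto simp: P V_nil\<close>)
qed

lemma delta_right:
  assumes ss: "shift_space {1,2,3} X" and k: "k \<ge> 1"
  shows "C_right (subst_image (delta_s k) X) \<noteq> {}"
proof -
  note P = P_delta[OF ss k]
  have sg: "[1] \<in> lang (subst_image (delta_s k) X)" "[2] \<in> lang (subst_image (delta_s k) X)" "[3] \<in> lang (subst_image (delta_s k) X)"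
    using single1[OF P[of 1 1, THEN iffD2]] single2[OF P[of 1 1, THEN iffD2]] single1[OF P[of 1 2, THEN iffD2]] single2[OF P[of 1 2, THEN iffD2]] single1[OF P[of 2 3, THEN iffD2]] single2[OF P[of 2 3, THEN iffD2]] by auto
  show ?thesis
  proof (rule disc_right[where a=1 and p="Inr 2" and pn="Inl 1" and q="Inr 3" and qn="Inl 2" and S="{Inr 2, Inl 1}"])
    show "[] \<in> lang (subst_image (delta_s k) X)" by (rule Y_nil[OF ss good_delta])
  next
    fix u v
    assume "u \<in> {Inr 2, Inl 1}" "v \<in> ext_vertices (subst_image (delta_s k) X) []" "v \<noteq> Inr 1"
      "ext_adj (subst_image (delta_s k) X) [] u v"
    then show "v \<in> {Inr 2, Inl 1}" by (cases v) (auto simp: P)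
  qed (use sg in \<open>auto simp: P V_nil\<close>)
qed

lemma zeta_right:
  assumes ss: "shift_space {1,2,3} X" and k: "k \<ge> 1"
  shows "C_right (subst_image (zeta_s k) X) \<noteq> {}"
proof -
  note P = P_zeta[OF ss k]
  have sg: "[1] \<in> lang (subst_image (zeta_s k) X)" "[2] \<in> lang (subst_image (zeta_s k) X)" "[3] \<in> lang (subst_image (zeta_s k) X)"
    using single1[OF P[of 1 3, THEN iffD2]] single2[OF P[of 1 3, THEN iffD2]] single1[OF P[of 1 2, THEN iffD2]] single2[OF P[of 1 2, THEN iffD2]] single1[OF P[of 2 1, THEN iffD2]] single2[OF P[of 2 1, THEN iffD2]] by auto
  show ?thesis
  proof (rule disc_right[where a=3 and p="Inr 2" and pn="Inl 1" and q="Inr 1" and qn="Inl 2" and S="{Inr 2, Inl 1}"])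
    show "[] \<in> lang (subst_image (zeta_s k) X)" by (rule Y_nil[OF ss good_zeta])
  next
    fix u v
    assume "u \<in> {Inr 2, Inl 1}" "v \<in> ext_vertices (subst_image (zeta_s k) X) []" "v \<noteq> Inr 3"
      "ext_adj (subst_image (zeta_s k) X) [] u v"
    then show "v \<in> {Inr 2, Inl 1}" by (cases v) (auto simp: P)
  qed (use sg in \<open>auto simp: P V_nil\<close>)
qed

lemma eta_right:
  assumes ss: "shift_space {1,2,3} X"
  shows "C_right (subst_image eta_s X) \<noteq> {}"
proof -
  note P = P_eta[OF ss]
  have sg: "[1] \<in> lang (subst_image eta_s X)" "[2] \<in> lang (subst_image eta_s X)" "[3] \<in> lang (subst_image eta_s X)"
    using single1[OF P[of 1 3, THEN iffD2]] single2[OF P[of 1 3, THEN iffD2]] single1[OF P[of 1 2, THEN iffD2]] single2[OF P[of 1 2, THEN iffD2]] single1[OF P[of 2 1, THEN iffD2]] single2[OF P[of 2 1, THEN iffD2]] by auto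
  show ?thesis
  proof (rule disc_right[where a=3 and p="Inr 2" and pn="Inl 1" and q="Inr 1" and qn="Inl 2" and S="{Inr 2, Inl 1}"])
    show "[] \<in> lang (subst_image eta_s X)" by (rule Y_nil[OF ss good_eta])
  next
    fix u v
    assume "u \<in> {Inr 2, Inl 1}" "v \<in> ext_vertices (subst_image eta_s X) []" "v \<noteq> Inr 3"
      "ext_adj (subst_image eta_s X) [] u v"
    then show "v \<in> {Inr 2, Inl 1}" by (cases v) (auto simp: P)
  qed (use sg in \<open>auto simp: P V_nil\<close>)
qed



lemma ss_nonempty_suffix: "\<sigma> a = x # t \<Longrightarrow> strict_suffix [] (\<sigma> a)"
  by (auto simp: strict_suffix_def)

lemma alpha_left:
  assumes ss: "shift_space {1,2,3} X" and dX: "dendric_shift X" and DP: "alpha_s \<in> DP X"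
    and CY: "C_left (subst_image alpha_s X) = {}"
  shows "C_left X = {}"
proof (rule ccontr)
  assume "C_left X \<noteq> {}"
  then obtain w a where w: "w \<in> lang X" "a \<in> C_left_word X w" unfolding C_left_def by blast
  obtain b1 b2 a1 a2 where H: "b1 \<noteq> b2" "a1 \<noteq> a" "a2 \<noteq> a" "a # w @ [b1] \<in> lang X" "a # w @ [b2] \<in> lang X"
     "a1 # w @ [b1] \<in> lang X" "a2 # w @ [b2] \<in> lang X"
    using extract_left[OF dX w] by blast
  have lt: "a \<in> {1,2,3}" "b1 \<in> {1,2,3}" using lang_letters[OF ss H(4)] by auto
  have "C_left (subst_image alpha_s X) \<noteq> {}"
  proof (rule transfer_left[OF DP w(1), where s="[]" and p="[1]" and ?a0.0=a and ?b0.0=b1 and la=a and ?r1.0=b1 and ?r2.0=b2 and ?l1.0=a1 and ?l2.0=a2])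
    show "strict_suffix [] (alpha_s a)" using lt by (auto simp: alpha_s_def subst3_def strict_suffix_def)
    show "prefix [1] (alpha_s b1)" using lt by (auto simp: alpha_s_def subst3_def)
  qed (use H edge_alpha[OF ss H(4)] edge_alpha[OF ss H(5)] edge_alpha[OF ss H(6)] edge_alpha[OF ss H(7)] in auto)
  then show False using CY by simp
qed

lemma alpha_right:
  assumes ss: "shift_space {1,2,3} X" and dX: "dendric_shift X" and DP: "alpha_s \<in> DP X"
    and CY: "C_right (subst_image alpha_s X) = {}"
  shows "C_right X = {}"
proof (rule ccontr)
  assume "C_right X \<noteq> {}"
  then obtain w b where w: "w \<in> lang X" "b \<in> C_right_word X w" unfolding C_right_def by blast
  obtain a1 a2 b1 b2 where H: "a1 \<noteq> a2" "b1 \<noteq> b" "b2 \<noteq> b" "a1 # w @ [b] \<in> lang X" "a2 # w @ [b] \<in> lang X"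
     "a1 # w @ [b1] \<in> lang X" "a2 # w @ [b2] \<in> lang X"
    using extract_right[OF dX w] by blast
  have lt: "a1 \<in> {1,2,3}" "b \<in> {1,2,3}" using lang_letters[OF ss H(4)] by auto
  have "C_right (subst_image alpha_s X) \<noteq> {}"
  proof (rule transfer_right[OF DP w(1), where s="[]" and p="[1]" and ?a0.0=a1 and ?b0.0=b and ?l1.0=a1 and ?l2.0=a2 and rb=b and ?r1.0=b1 and ?r2.0=b2])
    show "strict_suffix [] (alpha_s a1)" using lt by (auto simp: alpha_s_def subst3_def strict_suffix_def)
    show "prefix [1] (alpha_s b)" using lt by (auto simp: alpha_s_def subst3_def)
  qed (use H edge_alpha[OF ss H(4)] edge_alpha[OF ss H(5)] edge_alpha[OF ss H(6)] edge_alpha[OF ss H(7)] in auto)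
  then show False using CY by simp
qed

lemma gamma_left:
  assumes ss: "shift_space {1,2,3} X" and dX: "dendric_shift X" and DP: "gamma_s \<in> DP X"
    and CY: "C_left (subst_image gamma_s X) = {}"
  shows "C_left X = {}"
proof (rule ccontr)
  assume "C_left X \<noteq> {}"
  then obtain w a where w: "w \<in> lang X" "a \<in> C_left_word X w" unfolding C_left_def by blast
  obtain b1 b2 a1 a2 where H: "b1 \<noteq> b2" "a1 \<noteq> a" "a2 \<noteq> a" "a # w @ [b1] \<in> lang X" "a # w @ [b2] \<in> lang X"
     "a1 # w @ [b1] \<in> lang X" "a2 # w @ [b2] \<in> lang X"
    using extract_left[OF dX w] by blast
  have lt: "a \<in> {1,2,3}" "b1 \<in> {1,2,3}" using lang_letters[OF ss H(4)] by auto
  have lt2: "b2 \<in> {1,2,3}" using lang_letters[OF ss H(5)] by auto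
  have "C_left (subst_image gamma_s X) \<noteq> {}"
  proof (cases "b1 = 1 \<or> b2 = 1")
    case True
    show ?thesis
    proof (rule transfer_left[OF DP w(1), where s="[]" and p="[1]" and ?a0.0=a and ?b0.0=b1 and la=a
          and ?r1.0="if b1 = 1 then 1 else 2" and ?r2.0="if b2 = 1 then 1 else 2" and ?l1.0=a1 and ?l2.0=a2])
      show "strict_suffix [] (gamma_s a)" using lt by (auto simp: gamma_s_def subst3_def strict_suffix_def)
      show "prefix [1] (gamma_s b1)" using lt by (auto simp: gamma_s_def subst3_def)
    qed (use H True edge_gamma1[OF ss H(4)] edge_gamma1[OF ss H(5)] edge_gamma1[OF ss H(6)] edge_gamma1[OF ss H(7)] in auto)
  next
    case False
    then have b12: "b1 \<noteq> 1" "b2 \<noteq> 1" by auto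
    show ?thesis
    proof (rule transfer_left[OF DP w(1), where s="[]" and p="[1,2]" and ?a0.0=a and ?b0.0=b1 and la=a
          and ?r1.0="if b1 = 2 then 1 else 3" and ?r2.0="if b2 = 2 then 1 else 3" and ?l1.0=a1 and ?l2.0=a2])
      show "strict_suffix [] (gamma_s a)" using lt by (auto simp: gamma_s_def subst3_def strict_suffix_def)
      show "prefix [1,2] (gamma_s b1)" using lt b12 by (auto simp: gamma_s_def subst3_def)
      show "(if b1 = 2 then 1 else 3) \<noteq> (if b2 = 2 then (1::nat) else 3)" using lt lt2 b12 H(1) by auto
    qed (use H b12 edge_gamma2[OF ss H(4)] edge_gamma2[OF ss H(5)] edge_gamma2[OF ss H(6)] edge_gamma2[OF ss H(7)] in auto)
  qed
  then show False using CY by simp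
qed

lemma beta_right:
  assumes ss: "shift_space {1,2,3} X" and dX: "dendric_shift X" and DP: "beta_s \<in> DP X"
    and CY: "C_right (subst_image beta_s X) = {}"
  shows "C_right X = {}"
proof (rule ccontr)
  assume "C_right X \<noteq> {}"
  then obtain w b where w: "w \<in> lang X" "b \<in> C_right_word X w" unfolding C_right_def by blast
  obtain a1 a2 b1 b2 where H: "a1 \<noteq> a2" "b1 \<noteq> b" "b2 \<noteq> b" "a1 # w @ [b] \<in> lang X" "a2 # w @ [b] \<in> lang X"
     "a1 # w @ [b1] \<in> lang X" "a2 # w @ [b2] \<in> lang X"
    using extract_right[OF dX w] by blast
  have lt: "a1 \<in> {1,2,3}" "b \<in> {1,2,3}" using lang_letters[OF ss H(4)] by auto
  have lt2: "a2 \<in> {1,2,3}" using lang_letters[OF ss H(5)] by auto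
  have "C_right (subst_image beta_s X) \<noteq> {}"
  proof (cases "a1 = 1 \<or> a2 = 1")
    case True
    show ?thesis
    proof (rule transfer_right[OF DP w(1), where s="[]" and p="[1]" and ?a0.0=a1 and ?b0.0=b
          and ?l1.0="if a1 = 1 then 1 else 2" and ?l2.0="if a2 = 1 then 1 else 2" and rb=b and ?r1.0=b1 and ?r2.0=b2])
      show "strict_suffix [] (beta_s a1)" using lt by (auto simp: beta_s_def subst3_def strict_suffix_def)
      show "prefix [1] (beta_s b)" using lt by (auto simp: beta_s_def subst3_def)
    qed (use H True edge_beta1[OF ss H(4)] edge_beta1[OF ss H(5)] edge_beta1[OF ss H(6)] edge_beta1[OF ss H(7)] in auto)
  next
    case False
    then have a12: "a1 \<noteq> 1" "a2 \<noteq> 1" by auto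
    show ?thesis
    proof (rule transfer_right[OF DP w(1), where s="[2]" and p="[1]" and ?a0.0=a1 and ?b0.0=b
          and ?l1.0="if a1 = 2 then 1 else 3" and ?l2.0="if a2 = 2 then 1 else 3" and rb=b and ?r1.0=b1 and ?r2.0=b2])
      show "strict_suffix [2] (beta_s a1)" using lt a12 by (auto simp: beta_s_def subst3_def strict_suffix_def suffix_def)
      show "prefix [1] (beta_s b)" using lt by (auto simp: beta_s_def subst3_def)
      show "(if a1 = 2 then 1 else 3) \<noteq> (if a2 = 2 then (1::nat) else 3)" using lt lt2 a12 H(1) by auto
    qed (use H a12 edge_beta2[OF ss H(4)] edge_beta2[OF ss H(5)] edge_beta2[OF ss H(6)] edge_beta2[OF ss H(7)] in auto)
  qed
  then show False using CY by simp
qed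

theorem corollary5p9:
  fixes X :: "(int \<Rightarrow> nat) set" and \<sigma> :: "nat \<Rightarrow> nat list"
  assumes "shift_space {1,2,3} X"
    and "dendric_shift X"
    and "\<sigma> \<in> DP X"
  shows "(C_left (subst_image \<sigma> X) = {} \<longrightarrow> C_left X = {} \<and> left_invariant \<sigma>) \<and>
         (C_right (subst_image \<sigma> X) = {} \<longrightarrow> C_right X = {} \<and> right_invariant \<sigma>)"
proof -
  note ss = assms(1) and dX = assms(2) and DP = assms(3)
  have "\<sigma> \<in> S3" using DP unfolding DP_def by blast
  then consider (a) "\<sigma> = alpha_s" | (b) "\<sigma> = beta_s" | (g) "\<sigma> = gamma_s" | (e) "\<sigma> = eta_s"
    | (d) k where "k \<ge> 1" "\<sigma> = delta_s k" | (z) k where "k \<ge> 1" "\<sigma> = zeta_s k"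
    unfolding S3_def by blast
  then show ?thesis
  proof cases
    case a
    have li: "left_invariant alpha_s" by (simp add: left_invariant_def alpha_s_def subst3_def lcs_def)
    have ri: "right_invariant alpha_s" by (simp add: right_invariant_def alpha_s_def subst3_def)
    show ?thesis using a li ri alpha_left[OF ss dX] alpha_right[OF ss dX] DP by auto
  next
    case b
    have ri: "right_invariant beta_s" by (simp add: right_invariant_def beta_s_def subst3_def)
    show ?thesis using b ri beta_left[OF ss] beta_right[OF ss dX] DP by auto
  next
    case g
    have li: "left_invariant gamma_s" by (simp add: left_invariant_def gamma_s_def subst3_def lcs_def)
    show ?thesis using g li gamma_left[OF ss dX] gamma_right[OF ss] DP by auto
  next
    case e
    show ?thesis using e eta_left[OF ss] eta_right[OF ss] by auto
  next
    case d
    show ?thesis using d delta_left[OF ss] delta_right[OF ss] by auto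
  next
    case z
    show ?thesis using z zeta_left[OF ss] zeta_right[OF ss] by auto
  qed
qed


end
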